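(* Let $G=(V,E,w)$ be an $n$-vertex directed graph with real edge weights, let $h>0$ be an integer and $\tau\ge 2n^2$ an integer, and run the procedure $\textsc{DetPreprocessing}(G,\tau,h)$ described below. At termination: (1) $\textsc{Congestion}(v)\le\tau$ for every $v\in V$; (2) $\sum_{v\in V}\textsc{Congestion}(v)=O(n^3\log h)$; (3) $|C|=O(n^3\log h/\tau)$; (4) each computed path $\pi^i_{s,t}$ is an $h_i$-hop-improving shortest path in $G$ with regard to $G\setminus C$, where $C$ is the final set.
   Context: Let $i_h=\lceil \log_{3/2} h\rceil$ and $h_i=(3/2)^i$ for $i=0,\dots,i_h$. A path is $h'$-hop-restricted if it has at most $h'$ edges; $\mathbf{dist}^{h'}_H(s,t)$ denotes the minimum weight of an $h'$-hop-restricted $s$-to-$t$ path in $H$. For $C\subseteq V$, $G\setminus C$ denotes the induced subgraph $G[V\setminus C]$. A path $\pi_{s,t}$ from $s$ to $t$ is an $h'$-hop-improving shortest path in $G$ with regard to $H\subseteq G$ if it is a path in $G$ whose weight is at most $\mathbf{dist}^{h'}_H(s,t)$. The procedure $\textsc{DetPreprocessing}(G,\tau,h)$: initialize $C\gets\emptyset$, $\textsc{Congestion}(v)\gets 0$ for all $v\in V$, and $\pi^i_{s,t}\gets\bot$ (the empty path of weight $\infty$) for all $s,t,i$. Then process every vertex $s\in V$ exactly once as a root, in an arbitrary order; for each root $s$ and each $i\in[0,i_h]$ in turn: (1) compute, by Bellman-Ford from $s$ in $G[V\setminus C]$, paths $\pi^i_{s,t}$ for all $t\in V$ that are shortest among $h_i$-hop-restricted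 $s$-to-$t$ paths in $G[V\setminus C]$; (2) for every $t\in V$ and every vertex $u$ on $\pi^i_{s,t}$, increase $\textsc{Congestion}(u)$ by $\lceil n/h_i\rceil$; (3) set $C\gets\{v\in V:\textsc{Congestion}(v)>\tau/2\}$. *)

theory Defs
  imports Complex_Main "HOL-Library.Extended_Real"
begin

definition is_walk :: "(nat \<times> nat) set \<Rightarrow> nat set \<Rightarrow> nat list \<Rightarrow> nat \<Rightarrow> nat \<Rightarrow> bool" where
  "is_walk E U p s t \<longleftrightarrow> p \<noteq> [] \<and> hd p = s \<and> last p = t \<and> set p \<subseteq> U \<and>
     (\<forall>j < length p - 1. (p ! j, p ! Suc j) \<in> E)"

definition hops :: "nat list \<Rightarrow> nat" where
  "hops p = length p - 1"

definition walk_weight :: "(nat \<times> nat \<Rightarrow> real) \<Rightarrow> nat list \<Rightarrow> real" where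
  "walk_weight w p = (\<Sum>j < length p - 1. w (p ! j, p ! Suc j))"

text \<open>dist^{h'}_{G[U]}(s,t): minimum weight of an h'-hop-restricted s-t path in the
  induced subgraph G[U]; \<infinity> if there is none.\<close>
definition hop_dist :: "(nat \<times> nat) set \<Rightarrow> (nat \<times> nat \<Rightarrow> real) \<Rightarrow> nat set \<Rightarrow> real \<Rightarrow> nat \<Rightarrow> nat \<Rightarrow> ereal" where
  "hop_dist E w U hb s t =
     (INF p \<in> {p. is_walk E U p s t \<and> real (hops p) \<le> hb}. ereal (walk_weight w p))"

text \<open>Weight of a possibly-empty path; None is \<bottom>, the empty path of weight \<infinity>.\<close>
definition opt_weight :: "(nat \<times> nat \<Rightarrow> real) \<Rightarrow> nat list option \<Rightarrow> ereal" where
  "opt_weight w po = (case po of None \<Rightarrow> \<infinity> | Some p \<Rightarrow> ereal (walk_weight w p))"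

definition opt_vertices :: "nat list option \<Rightarrow> nat set" where
  "opt_vertices po = (case po of None \<Rightarrow> {} | Some p \<Rightarrow> set p)"

definition i_h :: "nat \<Rightarrow> nat" where
  "i_h h = nat \<lceil>log (3/2) (real h)\<rceil>"

definition h_i :: "nat \<Rightarrow> real" where
  "h_i i = (3/2) ^ i"

type_synonym dp_state = "nat set \<times> (nat \<Rightarrow> nat) \<times> (nat \<Rightarrow> nat \<Rightarrow> nat \<Rightarrow> nat list option)"

definition dp_step :: "nat set \<Rightarrow> (nat \<times> nat) set \<Rightarrow> (nat \<times> nat \<Rightarrow> real) \<Rightarrow> nat \<Rightarrow>
    nat \<times> nat \<Rightarrow> dp_state \<Rightarrow> dp_state \<Rightarrow> bool" where
  "dp_step V E w \<tau> si st st' \<longleftrightarrow>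
    (case si of (s, i) \<Rightarrow> case st of (C, cong, \<Pi>) \<Rightarrow> case st' of (C', cong', \<Pi>') \<Rightarrow>
     (\<exists>\<pi> :: nat \<Rightarrow> nat list option.
        (\<forall>t. t \<notin> V \<longrightarrow> \<pi> t = None) \<and>
        (\<forall>t\<in>V. case \<pi> t of
            None \<Rightarrow> hop_dist E w (V - C) (h_i i) s t = \<infinity>
          | Some p \<Rightarrow> is_walk E (V - C) p s t \<and> real (hops p) \<le> h_i i \<and>
                      ereal (walk_weight w p) = hop_dist E w (V - C) (h_i i) s t) \<and>
        \<Pi>' = \<Pi>(s := (\<Pi> s)(i := \<pi>)) \<and>
        cong' = (\<lambda>v. cong v + (\<Sum>t\<in>V. if v \<in> opt_vertices (\<pi> t)
                                       then nat \<lceil>real (card V) / h_i i\<rceil> else 0)) \<and>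
        C' = {v \<in> V. real (cong' v) > real \<tau> / 2}))"

inductive dp_run :: "nat set \<Rightarrow> (nat \<times> nat) set \<Rightarrow> (nat \<times> nat \<Rightarrow> real) \<Rightarrow> nat \<Rightarrow>
    (nat \<times> nat) list \<Rightarrow> dp_state \<Rightarrow> dp_state \<Rightarrow> bool"
  for V E w \<tau> where
  dp_run_Nil: "dp_run V E w \<tau> [] st st"
| dp_run_Cons: "dp_step V E w \<tau> j st st' \<Longrightarrow> dp_run V E w \<tau> js st' st'' \<Longrightarrow>
                dp_run V E w \<tau> (j # js) st st''"

definition dp_jobs :: "nat list \<Rightarrow> nat \<Rightarrow> (nat \<times> nat) list" where
  "dp_jobs ss ih = concat (map (\<lambda>s. map (\<lambda>i. (s, i)) [0..<Suc ih]) ss)"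

text \<open>A possible final state of DetPreprocessing(G, \<tau>, h) (arbitrary root order,
  arbitrary choice among shortest hop-restricted paths).\<close>
definition det_preprocessing :: "nat set \<Rightarrow> (nat \<times> nat) set \<Rightarrow> (nat \<times> nat \<Rightarrow> real) \<Rightarrow>
    nat \<Rightarrow> nat \<Rightarrow> dp_state \<Rightarrow> bool" where
  "det_preprocessing V E w \<tau> h fin \<longleftrightarrow>
     (\<exists>ss. distinct ss \<and> set ss = V \<and>
        dp_run V E w \<tau> (dp_jobs ss (i_h h)) ({}, (\<lambda>_. 0), (\<lambda>_ _ _. None)) fin)"

end

theory Submission
  imports Defs
begin

lemma hop_dist_mono: "U' \<subseteq> U \<Longrightarrow> hop_dist E w U hb s t \<le> hop_dist E w U' hb s t"
  unfolding hop_dist_def by (rule INF_superset_mono) (auto simp: is_walk_def)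

lemma is_walk_mono: "is_walk E U p s t \<Longrightarrow> U \<subseteq> U' \<Longrightarrow> is_walk E U' p s t"
  by (auto simp: is_walk_def)

lemma Kc_bound:
  fixes n c :: nat and h :: real
  assumes h1: "h \<ge> 1" and cn: "c \<le> n" and ch: "real c \<le> h + 1"
  shows "real (nat \<lceil>real n / h\<rceil>) * real c \<le> 4 * real n"
proof (cases "h \<le> real n")
  case True
  have n1: "real n \<ge> 1" using True h1 by linarith
  have K: "real (nat \<lceil>real n / h\<rceil>) \<le> real n / h + 1"
    using h1 by (simp add: of_nat_nat)
  have "real (nat \<lceil>real n / h\<rceil>) * real c \<le> (real n / h + 1) * (h + 1)"
    by (rule mult_mono[OF K ch]) (use h1 in auto)
  also have "\<dots> = real n + real n / h + h + 1" using h1 by (simp add: field_simps)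
  also have "real n / h \<le> real n" using h1 n1
    by (simp add: divide_le_eq mult_le_cancel_left1 )
  then have "real n + real n / h + h + 1 \<le> 4 * real n" using True n1 by linarith
  finally show ?thesis .
next
  case False
  have "real n / h \<le> 1" using False h1 by (simp add: divide_le_eq)
  then have "\<lceil>real n / h\<rceil> \<le> 1" by linarith
  then have "nat \<lceil>real n / h\<rceil> \<le> 1" by linarith
  then have "real (nat \<lceil>real n / h\<rceil>) \<le> 1" by linarith
  then have "real (nat \<lceil>real n / h\<rceil>) * real c \<le> 1 * real c"
    by (rule mult_right_mono) simp
  then show ?thesis using cn by simp
qed

definition Qinv where
  "Qinv V E w C \<Pi> s i \<longleftrightarrow> (\<forall>t\<in>V. (case \<Pi> s i t of None \<Rightarrow> True | Some p \<Rightarrow> is_walk E V p s t) \<and>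
         opt_weight w (\<Pi> s i t) \<le> hop_dist E w (V - C) (h_i i) s t)"

lemma step_facts:
  assumes step: "dp_step V E w \<tau> (s,i) (C,cong,\<Pi>) (C',cong',\<Pi>')"
  and fin: "finite V" and tau: "2*(card V)^2 \<le> \<tau>"
  and invC: "C = {v\<in>V. real (cong v) > real \<tau>/2}"
  and bound: "\<forall>v\<in>V. cong v \<le> \<tau>"
  shows "C' = {v\<in>V. real (cong' v) > real \<tau>/2}" "\<forall>v\<in>V. cong' v \<le> \<tau>" "C \<subseteq> C'"
   "(\<Sum>v\<in>V. real (cong' v)) \<le> (\<Sum>v\<in>V. real (cong v)) + 4 * real (card V)^2"
   "Qinv V E w C' \<Pi>' s i" "\<forall>x y. Qinv V E w C \<Pi> x y \<longrightarrow> Qinv V E w C' \<Pi>' x y"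
proof -
  from step obtain \<pi> where
   pn: "\<forall>t. t\<notin>V \<longrightarrow> \<pi> t = None" and
   pv: "\<forall>t\<in>V. case \<pi> t of None \<Rightarrow> hop_dist E w (V - C) (h_i i) s t = \<infinity> | Some p \<Rightarrow> is_walk E (V - C) p s t \<and> real (hops p) \<le> h_i i \<and> ereal (walk_weight w p) = hop_dist E w (V - C) (h_i i) s t"
   and PiD: "\<Pi>' = \<Pi>(s := (\<Pi> s)(i := \<pi>))"
   and congD: "cong' = (\<lambda>v. cong v + (\<Sum>t\<in>V. if v \<in> opt_vertices (\<pi> t) then nat \<lceil>real (card V) / h_i i\<rceil> else 0))"
   and CD: "C' = {v \<in> V. real (cong' v) > real \<tau> / 2}"
   unfolding dp_step_def by auto
  define K where "K = nat \<lceil>real (card V) / h_i i\<rceil>"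
  define n where "n = card V"
  have hi1: "h_i i \<ge> 1" by (simp add: h_i_def)
  have KleN: "K \<le> n"
  proof -
    have "real (card V) / h_i i \<le> real (card V)" using hi1
      by (simp add: divide_le_eq mult_le_cancel_left1)
    then have "\<lceil>real (card V) / h_i i\<rceil> \<le> int (card V)"
      by (simp add: ceiling_le_iff)
    then show ?thesis unfolding K_def n_def by linarith
  qed
  have mono: "\<forall>v. cong v \<le> cong' v" using congD by simp
  show "C' = {v\<in>V. real (cong' v) > real \<tau>/2}" by (rule CD)
  show CC: "C \<subseteq> C'"
  proof
    fix v assume "v \<in> C"
    then have "v \<in> V" "real (cong v) > real \<tau>/2" using invC by auto
    moreover have "real (cong v) \<le> real (cong' v)" using mono by simp
    ultimately show "v \<in> C'" using CD by auto
  qed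
  have vertsV: "opt_vertices (\<pi> t) \<subseteq> V - C" for t
  proof (cases "t \<in> V")
    case True
    then show ?thesis using pv[rule_format, OF True]
      by (cases "\<pi> t") (auto simp: opt_vertices_def is_walk_def)
  next
    case False
    then show ?thesis using pn by (simp add: opt_vertices_def)
  qed
  show "\<forall>v\<in>V. cong' v \<le> \<tau>"
  proof
    fix v assume vV: "v \<in> V"
    show "cong' v \<le> \<tau>"
    proof (cases "v \<in> C")
      case True
      then have "\<forall>t. v \<notin> opt_vertices (\<pi> t)" using vertsV by blast
      then have "cong' v = cong v" using congD by simp
      then show ?thesis using bound vV by simp
    next
      case False
      then have c2: "real (cong v) \<le> real \<tau> / 2" using invC vV by auto
      have "(\<Sum>t\<in>V. if v \<in> opt_vertices (\<pi> t) then K else 0) \<le> (\<Sum>t\<in>V. K)"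
        by (rule sum_mono) auto
      also have "\<dots> = n * K" by (simp add: n_def)
      also have "\<dots> \<le> n * n" using KleN by simp
      finally have "real (\<Sum>t\<in>V. if v \<in> opt_vertices (\<pi> t) then K else 0) \<le> real n * real n"
        by (metis of_nat_le_iff of_nat_mult)
      moreover have "2 * (real n * real n) \<le> real \<tau>" using tau unfolding n_def
        by (metis of_nat_le_iff of_nat_mult of_nat_numeral power2_eq_square)
      moreover have "cong' v = cong v + (\<Sum>t\<in>V. if v \<in> opt_vertices (\<pi> t) then K else 0)"
        unfolding congD K_def by simp
      ultimately have "real (cong' v) \<le> real \<tau>" using c2 by linarith
      then show ?thesis by simp
    qed
  qed
  have pt: "real K * real (card (opt_vertices (\<pi> t))) \<le> 4 * real n" if tV: "t \<in> V" for t
  proof -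
    have a: "card (opt_vertices (\<pi> t)) \<le> n" unfolding n_def
      using vertsV[of t] fin by (meson Diff_subset card_mono subset_trans)
    have b: "real (card (opt_vertices (\<pi> t))) \<le> h_i i + 1"
    proof (cases "\<pi> t")
      case None then show ?thesis using hi1 by (simp add: opt_vertices_def)
    next
      case (Some p)
      then have "real (hops p) \<le> h_i i" "p \<noteq> []" using pv tV by (force simp: is_walk_def)+
      moreover have "card (set p) \<le> length p" by (rule card_length)
      ultimately show ?thesis using Some by (simp add: opt_vertices_def hops_def)
    qed
    show ?thesis using Kc_bound[OF hi1 a b] by (simp add: K_def n_def)
  qed
  have "(\<Sum>v\<in>V. real (cong' v)) = (\<Sum>v\<in>V. real (cong v)) + (\<Sum>v\<in>V. \<Sum>t\<in>V. if v \<in> opt_vertices (\<pi> t) then real K else 0)"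
    unfolding congD K_def by (simp add: sum.distrib of_nat_sum if_distrib cong: if_cong)
  also have "(\<Sum>v\<in>V. \<Sum>t\<in>V. if v \<in> opt_vertices (\<pi> t) then real K else 0) = (\<Sum>t\<in>V. \<Sum>v\<in>V. if v \<in> opt_vertices (\<pi> t) then real K else 0)"
    by (rule sum.swap)
  also have "\<dots> = (\<Sum>t\<in>V. real K * real (card (opt_vertices (\<pi> t))))"
  proof (rule sum.cong[OF refl])
    fix t assume "t \<in> V"
    have "(\<Sum>v\<in>V. if v \<in> opt_vertices (\<pi> t) then real K else 0) = (\<Sum>v\<in>V \<inter> opt_vertices (\<pi> t). real K)"
      by (rule sum.inter_restrict[symmetric, OF fin])
    also have "V \<inter> opt_vertices (\<pi> t) = opt_vertices (\<pi> t)" using vertsV[of t] by blast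
    finally show "(\<Sum>v\<in>V. if v \<in> opt_vertices (\<pi> t) then real K else 0) = real K * real (card (opt_vertices (\<pi> t)))"
      by simp
  qed
  also have "(\<Sum>t\<in>V. real K * real (card (opt_vertices (\<pi> t)))) \<le> (\<Sum>t\<in>V. 4 * real n)"
    by (rule sum_mono) (rule pt)
  also have "\<dots> = 4 * real (card V)^2" by (simp add: n_def power2_eq_square)
  finally show "(\<Sum>v\<in>V. real (cong' v)) \<le> (\<Sum>v\<in>V. real (cong v)) + 4 * real (card V)^2"
    by simp
  have hdm: "hop_dist E w (V - C) hb x y \<le> hop_dist E w (V - C') hb x y" for hb x y
    by (rule hop_dist_mono) (use CC in blast)
  show "Qinv V E w C' \<Pi>' s i"
    unfolding Qinv_def
  proof
    fix t assume tV: "t \<in> V"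
    show "(case \<Pi>' s i t of None \<Rightarrow> True | Some p \<Rightarrow> is_walk E V p s t) \<and>
         opt_weight w (\<Pi>' s i t) \<le> hop_dist E w (V - C') (h_i i) s t"
    proof (cases "\<pi> t")
      case None
      then have "hop_dist E w (V - C') (h_i i) s t = \<infinity>"
        using pv tV hdm[of "h_i i" s t] by force
      then show ?thesis using None PiD by (simp add: opt_weight_def)
    next
      case (Some p)
      then have "is_walk E (V - C) p s t" "ereal (walk_weight w p) = hop_dist E w (V - C) (h_i i) s t"
        using pv tV by force+
      then show ?thesis using Some PiD hdm[of "h_i i" s t]
        by (auto simp: opt_weight_def intro: is_walk_mono)
    qed
  qed
  show "\<forall>x y. Qinv V E w C \<Pi> x y \<longrightarrow> Qinv V E w C' \<Pi>' x y"
  proof (intro allI impI)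
    fix x y assume q: "Qinv V E w C \<Pi> x y"
    show "Qinv V E w C' \<Pi>' x y"
    proof (cases "x = s \<and> y = i")
      case True then show ?thesis using \<open>Qinv V E w C' \<Pi>' s i\<close> by simp
    next
      case False
      then have "\<Pi>' x y = \<Pi> x y" using PiD by auto
      then show ?thesis using q hdm unfolding Qinv_def by (metis order_trans)
    qed
  qed
qed


lemma run_facts:
  assumes "dp_run V E w \<tau> js st st'" "finite V" "2*(card V)^2 \<le> \<tau>"
  shows "\<And>C cong \<Pi> C' cong' \<Pi>'. st = (C,cong,\<Pi>) \<Longrightarrow> st' = (C',cong',\<Pi>') \<Longrightarrow>
    C = {v\<in>V. real (cong v) > real \<tau>/2} \<Longrightarrow> \<forall>v\<in>V. cong v \<le> \<tau> \<Longrightarrow>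
    C' = {v\<in>V. real (cong' v) > real \<tau>/2} \<and> (\<forall>v\<in>V. cong' v \<le> \<tau>) \<and>
    (\<Sum>v\<in>V. real (cong' v)) \<le> (\<Sum>v\<in>V. real (cong v)) + 4 * real (card V)^2 * real (length js) \<and>
    (\<forall>x\<in>set js. Qinv V E w C' \<Pi>' (fst x) (snd x)) \<and>
    (\<forall>x y. Qinv V E w C \<Pi> x y \<longrightarrow> Qinv V E w C' \<Pi>' x y)"
  using assms(1)
proof (induction rule: dp_run.induct)
  case (dp_run_Nil st)
  then show ?case by auto
next
  case (dp_run_Cons j st st1 js st'')
  obtain s i where j: "j = (s,i)" by (cases j)
  obtain C1 cong1 \<Pi>1 where st1: "st1 = (C1, cong1, \<Pi>1)" by (cases st1)
  note sf = step_facts[OF dp_run_Cons.hyps(1)[unfolded j dp_run_Cons.prems(1) st1] assms(2,3)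
     dp_run_Cons.prems(3,4)]
  note ih = dp_run_Cons.IH[OF st1 dp_run_Cons.prems(2) sf(1,2)]
  show ?case
  proof (intro conjI)
    show "C' = {v\<in>V. real (cong' v) > real \<tau>/2}" "\<forall>v\<in>V. cong' v \<le> \<tau>" using ih by auto
    show "(\<Sum>v\<in>V. real (cong' v)) \<le> (\<Sum>v\<in>V. real (cong v)) + 4 * real (card V)^2 * real (length (j # js))"
      using ih sf(4) by (simp add: algebra_simps)
    show "\<forall>x\<in>set (j # js). Qinv V E w C' \<Pi>' (fst x) (snd x)"
      using ih sf(5) j by auto
    show "\<forall>x y. Qinv V E w C \<Pi> x y \<longrightarrow> Qinv V E w C' \<Pi>' x y"
      using ih sf(6) by blast
  qed
qed

lemma ln32: "ln (3/2::real) \<ge> 1/3"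
proof -
  have "ln (2/3::real) \<le> 2/3 - 1" by (rule ln_le_minus_one) simp
  moreover have "ln (2/3::real) = - ln (3/2)" by (simp add: ln_div)
  ultimately show ?thesis by simp
qed

lemma ih_bound:
  assumes "h > (0::nat)"
  shows "real (i_h h) + 1 \<le> 3 * (1 + ln (real h))"
proof -
  have lh: "ln (real h) \<ge> 0" using assms by simp
  have l0: "log (3/2) (real h) \<ge> 0" using assms by simp
  have "real (i_h h) = real_of_int \<lceil>log (3/2) (real h)\<rceil>"
    unfolding i_h_def using l0 by simp
  also have "\<dots> \<le> log (3/2) (real h) + 1" by linarith
  finally have A: "real (i_h h) \<le> log (3/2) (real h) + 1" .
  have "log (3/2) (real h) = ln (real h) / ln (3/2)" by (simp add: log_def)
  also have "\<dots> \<le> 3 * ln (real h)"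
  proof -
    have p: "ln (3/2::real) > 0" using ln32 by linarith
    have "3 * ln (real h) * (1/3) \<le> 3 * ln (real h) * ln (3/2)"
      by (rule mult_left_mono[OF ln32]) (use lh in simp)
    then have "ln (real h) \<le> 3 * ln (real h) * ln (3/2)" by simp
    then show ?thesis using p by (simp add: divide_le_eq)
  qed
  finally have B: "log (3/2) (real h) \<le> 3 * ln (real h)" .
  have "3 * (1 + ln (real h)) = 3 + 3 * ln (real h)" by simp
  then show ?thesis using A B by linarith
qed


lemma jobs_len: "length (dp_jobs ss k) = length ss * Suc k"
  unfolding dp_jobs_def by (induction ss) auto

lemma jobs_set: "s \<in> set ss \<Longrightarrow> i \<le> k \<Longrightarrow> (s, i) \<in> set (dp_jobs ss k)"
  unfolding dp_jobs_def by (auto simp: image_iff less_Suc_eq_le)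

theorem lemma3p4:
  shows "\<exists>c::real. \<forall>(V::nat set) (E::(nat \<times> nat) set) (w::nat \<times> nat \<Rightarrow> real)
      (h::nat) (\<tau>::nat) (C::nat set) (cong::nat \<Rightarrow> nat) \<Pi>.
    finite V \<and> E \<subseteq> V \<times> V \<and> h > 0 \<and> \<tau> \<ge> 2 * (card V)^2 \<and>
    det_preprocessing V E w \<tau> h (C, cong, \<Pi>) \<longrightarrow>
      (\<forall>v\<in>V. cong v \<le> \<tau>) \<and>
      (\<Sum>v\<in>V. real (cong v)) \<le> c * real (card V) ^ 3 * (1 + ln (real h)) \<and>
      real (card C) \<le> c * real (card V) ^ 3 * (1 + ln (real h)) / real \<tau> \<and>
      (\<forall>s\<in>V. \<forall>t\<in>V. \<forall>i \<le> i_h h.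
         (case \<Pi> s i t of None \<Rightarrow> True | Some p \<Rightarrow> is_walk E V p s t) \<and>
         opt_weight w (\<Pi> s i t) \<le> hop_dist E w (V - C) (h_i i) s t)"
proof (rule exI[of _ 24], intro allI impI, elim conjE, intro conjI)
  fix V :: "nat set" and E w h \<tau> C cong \<Pi>
  assume fin: "finite V" and h0: "h > 0" and tau: "\<tau> \<ge> 2 * (card V)^2"
    and dp: "det_preprocessing V E w \<tau> h (C, cong, \<Pi>)"
  from dp obtain ss where ss: "distinct ss" "set ss = V"
    and run: "dp_run V E w \<tau> (dp_jobs ss (i_h h)) ({}, (\<lambda>_. 0), (\<lambda>_ _ _. None)) (C, cong, \<Pi>)"
    unfolding det_preprocessing_def by blast
  have init: "({}::nat set) = {v\<in>V. real ((\<lambda>_. 0::nat) v) > real \<tau>/2}" by auto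
  note rf = run_facts[OF run fin tau refl refl init]
  define n where "n = real (card V)"
  define L where "L = 1 + ln (real h)"
  have lenss: "length ss = card V" using ss distinct_card by metis
  have ihb: "real (Suc (i_h h)) \<le> 3 * L" using ih_bound[OF h0] unfolding L_def by simp
  have S: "(\<Sum>v\<in>V. real (cong v)) \<le> 4 * n^2 * (n * real (Suc (i_h h)))"
    using rf by (simp add: jobs_len lenss n_def algebra_simps)
  have n0: "n \<ge> 0" unfolding n_def by simp
  have "4 * n^2 * (n * real (Suc (i_h h))) \<le> 4 * n^2 * (n * (3 * L))"
    using ihb n0 by (intro mult_left_mono) auto
  then have S2: "(\<Sum>v\<in>V. real (cong v)) \<le> 12 * n^3 * L"
    using S by (simp add: power2_eq_square power3_eq_cube algebra_simps)
  have L0: "L \<ge> 0" unfolding L_def using h0 by simp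
  show "\<forall>v\<in>V. cong v \<le> \<tau>" using rf by simp
  show "(\<Sum>v\<in>V. real (cong v)) \<le> 24 * real (card V) ^ 3 * (1 + ln (real h))"
  proof -
    have "0 \<le> n^3 * L" using n0 L0 by simp
    then show ?thesis using S2 unfolding n_def[symmetric] L_def[symmetric] by linarith
  qed
  show "real (card C) \<le> 24 * real (card V) ^ 3 * (1 + ln (real h)) / real \<tau>"
  proof (cases "card V = 0")
    case True
    then have "V = {}" using fin by simp
    then have "C = {}" using rf by simp
    then show ?thesis using True by simp
  next
    case False
    then have "0 < 2 * (card V)^2" by simp
    then have taup: "real \<tau> > 0" using tau by linarith
    have CV: "C \<subseteq> V" and Cd: "\<forall>v\<in>C. real (cong v) > real \<tau>/2" using rf by auto
    have "real (card C) * (real \<tau>/2) = (\<Sum>v\<in>C. real \<tau>/2)" by simp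
    also have "\<dots> \<le> (\<Sum>v\<in>C. real (cong v))" using Cd by (intro sum_mono) auto
    also have "\<dots> \<le> (\<Sum>v\<in>V. real (cong v))" using CV fin by (intro sum_mono2) auto
    also have "\<dots> \<le> 12 * n^3 * L" by (rule S2)
    finally have "real (card C) * real \<tau> \<le> 24 * n^3 * L" by simp
    then show ?thesis using taup unfolding n_def[symmetric] L_def[symmetric]
      by (simp add: le_divide_eq)
  qed
  show "\<forall>s\<in>V. \<forall>t\<in>V. \<forall>i \<le> i_h h.
         (case \<Pi> s i t of None \<Rightarrow> True | Some p \<Rightarrow> is_walk E V p s t) \<and>
         opt_weight w (\<Pi> s i t) \<le> hop_dist E w (V - C) (h_i i) s t"
  proof (intro ballI allI impI)
    fix s t i assume sV: "s \<in> V" and tV: "t \<in> V" and ii: "i \<le> i_h h"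
    have "(s,i) \<in> set (dp_jobs ss (i_h h))" using jobs_set sV ii ss(2) by blast
    then have "Qinv V E w C \<Pi> s i" using rf by fastforce
    then show "(case \<Pi> s i t of None \<Rightarrow> True | Some p \<Rightarrow> is_walk E V p s t) \<and>
         opt_weight w (\<Pi> s i t) \<le> hop_dist E w (V - C) (h_i i) s t"
      using tV unfolding Qinv_def by blast
  qed
qed

end
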